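(* Let $S\subseteq\{1,\dots,p\}$, let $\rho_\lambda$ be $\mu$-amenable, and suppose $\mathcal L_n$ satisfies the $(\alpha,\tau)$ joint RSC condition. Let $\theta^\ast,\hat\theta\in\mathbb{R}^{p\times q}$ have all rows outside $S$ equal to zero, with $\|\theta^\ast\|_{1,2}\le R$ and $\|\hat\theta\|_{1,2}\le R$. Suppose $\hat\theta$ is a zero-subgradient point of the oracle objective, i.e. there is $\hat z\in\partial\|\hat\theta\|_{1,2}$ such that the rows indexed by $S$ of $\nabla\bar{\mathcal L}_n(\hat\theta)+\lambda\hat z$ vanish. Assume further $\|\nabla\mathcal L_n(\theta^\ast)\|_{\infty,2}\le\lambda/2$, $\lambda\le\alpha_2/(6R)$ and $n\ge\frac{16R^2\tau_2^2}{\alpha_2^2}\log p$. Then $\|\hat\theta-\theta^\ast\|_F\le1$.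
   Context: Notation: for $A\in\mathbb{R}^{p\times q}$, $A_{i:}$ row $i$, $A_{:j}$ column $j$; $\|A\|_{a,b}=(\sum_i\|A_{i:}\|_b^a)^{1/a}$ ($a=\infty$: max over $i$); $\|A\|_F$ Frobenius norm; $\langle A,B\rangle=\mathrm{tr}(A^TB)$. $\mathcal L_n(\theta)=\sum_{j=1}^q[\frac12\theta_{:j}^T\hat\Gamma^{(j)}\theta_{:j}-(\hat\gamma^{(j)})^T\theta_{:j}]$ for given symmetric PSD $\hat\Gamma^{(j)}$ and vectors $\hat\gamma^{(j)}$. Joint RSC: $\langle\nabla\mathcal L_n(\theta+\Delta)-\nabla\mathcal L_n(\theta),\Delta\rangle\ge\alpha_1\|\Delta\|_F^2-\tau_1\frac{\log p}{n}\|\Delta\|_{1,2}^2$ if $\|\Delta\|_F\le1$, and $\ge\alpha_2\|\Delta\|_F-\tau_2\sqrt{\frac{\log p}{n}}\|\Delta\|_{1,2}$ if $\|\Delta\|_F\ge1$. $\mu$-amenable: $\rho_\lambda$ symmetric with $\rho_\lambda(0)=0$, nondecreasing on $\mathbb{R}^+$, $\rho_\lambda(t)/t$ nonincreasing on $\mathbb{R}^+$, differentiable for $t\ne0$, $\rho_\lambda(t)+\frac\mu2t^2$ convex, $\lim_{t\to0^+}\rho'_\lambda(t)=\lambda$. $q_\lambda(t)=\lambda|t|-\rho_\lambda(t)$, $\bar{\mathcal L}_n(\theta)=\mathcal L_n(\theta)-\sum_iq_\lambda(\|\theta_{i:}\|_2)$. Subdifferential: $z\in\partial\|\theta\|_{1,2}$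 iff $z_{i:}=\theta_{i:}/\|\theta_{i:}\|_2$ when $\theta_{i:}\ne0$ and $\|z_{i:}\|_2\le1$ when $\theta_{i:}=0$. *)

theory Defs
  imports "HOL-Analysis.Analysis"
begin

text \<open>Matrices in R^{p x q} are rendered as real^'q^'p: row i is A$i, column j is column j A.
  The Euclidean norm on this type is the Frobenius norm, and the inner product is tr(A^T B).\<close>

definition norm12 :: "real^'q^'p \<Rightarrow> real" where
  "norm12 A = (\<Sum>i\<in>UNIV. norm (A $ i))"

definition norminf2 :: "real^'q^'p \<Rightarrow> real" where
  "norminf2 A = Max (range (\<lambda>i. norm (A $ i)))"

definition grad :: "('a::euclidean_space \<Rightarrow> real) \<Rightarrow> 'a \<Rightarrow> 'a" where
  "grad f x = (THE g. (f has_derivative (\<lambda>h. g \<bullet> h)) (at x))"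

definition Ln :: "('q \<Rightarrow> real^'p^'p) \<Rightarrow> ('q \<Rightarrow> real^'p) \<Rightarrow> real^'q^'p \<Rightarrow> real" where
  "Ln Gam gam \<theta> = (\<Sum>j\<in>UNIV. (1/2) * (column j \<theta> \<bullet> (Gam j *v column j \<theta>)) - gam j \<bullet> column j \<theta>)"

definition amenable :: "(real \<Rightarrow> real) \<Rightarrow> real \<Rightarrow> real \<Rightarrow> bool" where
  "amenable \<rho> lam \<mu> \<longleftrightarrow>
     \<mu> \<ge> 0 \<and>
     (\<forall>t. \<rho> (- t) = \<rho> t) \<and> \<rho> 0 = 0 \<and>
     (\<forall>s t. 0 \<le> s \<and> s \<le> t \<longrightarrow> \<rho> s \<le> \<rho> t) \<and>
     (\<forall>s t. 0 < s \<and> s \<le> t \<longrightarrow> \<rho> t / t \<le> \<rho> s / s) \<and>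
     (\<forall>t. t \<noteq> 0 \<longrightarrow> \<rho> differentiable (at t)) \<and>
     convex_on UNIV (\<lambda>t. \<rho> t + \<mu> / 2 * t\<^sup>2) \<and>
     ((deriv \<rho>) \<longlongrightarrow> lam) (at_right 0)"

definition qlam :: "(real \<Rightarrow> real) \<Rightarrow> real \<Rightarrow> real \<Rightarrow> real" where
  "qlam \<rho> lam t = lam * \<bar>t\<bar> - \<rho> t"

definition Lbar :: "('q \<Rightarrow> real^'p^'p) \<Rightarrow> ('q \<Rightarrow> real^'p) \<Rightarrow> (real \<Rightarrow> real) \<Rightarrow> real
    \<Rightarrow> real^'q^'p \<Rightarrow> real" where
  "Lbar Gam gam \<rho> lam \<theta> = Ln Gam gam \<theta> - (\<Sum>i\<in>UNIV. qlam \<rho> lam (norm (\<theta> $ i)))"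

definition joint_RSC :: "(real^'q^'p \<Rightarrow> real) \<Rightarrow> nat \<Rightarrow> real \<Rightarrow> real \<Rightarrow> real \<Rightarrow> real \<Rightarrow> bool" where
  "joint_RSC L n \<alpha>1 \<alpha>2 \<tau>1 \<tau>2 \<longleftrightarrow>
     \<alpha>1 > 0 \<and> \<alpha>2 > 0 \<and> \<tau>1 \<ge> 0 \<and> \<tau>2 \<ge> 0 \<and>
     (\<forall>\<theta> \<Delta>. norm \<Delta> \<le> 1 \<longrightarrow>
        (grad L (\<theta> + \<Delta>) - grad L \<theta>) \<bullet> \<Delta>
          \<ge> \<alpha>1 * (norm \<Delta>)\<^sup>2 - \<tau>1 * (ln (real CARD('p)) / real n) * (norm12 \<Delta>)\<^sup>2) \<and>
     (\<forall>\<theta> \<Delta>. norm \<Delta> \<ge> 1 \<longrightarrow>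
        (grad L (\<theta> + \<Delta>) - grad L \<theta>) \<bullet> \<Delta>
          \<ge> \<alpha>2 * norm \<Delta> - \<tau>2 * sqrt (ln (real CARD('p)) / real n) * norm12 \<Delta>)"

definition subgrad12 :: "real^'q^'p \<Rightarrow> real^'q^'p \<Rightarrow> bool" where
  "subgrad12 z \<theta> \<longleftrightarrow>
     (\<forall>i. (\<theta> $ i \<noteq> 0 \<longrightarrow> z $ i = \<theta> $ i /\<^sub>R norm (\<theta> $ i)) \<and>
          (\<theta> $ i = 0 \<longrightarrow> norm (z $ i) \<le> 1))"

end

theory Submission
  imports Defs
begin

lemma rho_cont:
  assumes "convex_on UNIV (\<lambda>t. \<rho> t + \<mu> / 2 * t\<^sup>2)"
  shows "continuous_on UNIV (\<rho>::real\<Rightarrow>real)"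
proof -
  have c: "continuous_on UNIV (\<lambda>t. \<rho> t + \<mu> / 2 * t\<^sup>2)"
    using convex_on_continuous[OF open_UNIV assms] .
  have "continuous_on UNIV (\<lambda>t. (\<rho> t + \<mu> / 2 * t\<^sup>2) - \<mu> / 2 * t\<^sup>2)"
    by (intro continuous_intros c)
  then show ?thesis by simp
qed

lemma rho_lim:
  assumes cont: "continuous_on UNIV (\<rho>::real\<Rightarrow>real)" and r0: "\<rho> 0 = 0"
    and diff: "\<forall>t. t \<noteq> 0 \<longrightarrow> \<rho> differentiable (at t)"
    and lim: "((deriv \<rho>) \<longlongrightarrow> lam) (at_right 0)" and e: "e > 0"
  shows "\<exists>d>0. \<forall>t. 0 < t \<and> t < d \<longrightarrow> \<bar>\<rho> t / t - lam\<bar> \<le> e"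
proof -
  have "\<forall>\<^sub>F x in at_right 0. dist (deriv \<rho> x) lam < e"
    using lim e by (rule tendstoD)
  then obtain b where b: "b > 0" "\<And>y. 0 < y \<Longrightarrow> y < b \<Longrightarrow> dist (deriv \<rho> y) lam < e"
    unfolding eventually_at_right_field by auto
  show ?thesis
  proof (intro exI[of _ b] conjI allI impI)
    fix t :: real assume t: "0 < t \<and> t < b"
    have "\<exists>l z. 0 < z \<and> z < t \<and> (\<rho> has_real_derivative l) (at z) \<and> \<rho> t - \<rho> 0 = (t - 0) * l"
      apply (rule MVT)
      using t apply simp
      using continuous_on_subset[OF cont] apply blast
      using diff by auto
    then obtain l z where z: "0 < z" "z < t" "(\<rho> has_real_derivative l) (at z)" "\<rho> t - \<rho> 0 = (t - 0) * l"
      by blast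
    have "deriv \<rho> z = l" using DERIV_imp_deriv[OF z(3)] .
    moreover have "\<rho> t / t = l" using z(4) r0 t by (simp add: field_simps)
    ultimately show "\<bar>\<rho> t / t - lam\<bar> \<le> e" using b(2)[of z] z t by (simp add: dist_real_def)
  qed (use b in auto)
qed

lemma deriv_bounds:
  assumes mono: "\<forall>s t. 0 \<le> s \<and> s \<le> t \<longrightarrow> \<rho> s \<le> \<rho> t"
    and ratio: "\<forall>s t. 0 < s \<and> s \<le> t \<longrightarrow> \<rho> t / t \<le> \<rho> s / s"
    and lim: "\<And>e. e > 0 \<Longrightarrow> \<exists>d>0. \<forall>t. 0 < t \<and> t < d \<longrightarrow> \<bar>\<rho> t / t - lam\<bar> \<le> e"
    and D: "((\<rho>::real\<Rightarrow>real) has_real_derivative D) (at r)" and r: "r > 0"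
  shows "0 \<le> D \<and> D \<le> lam"
proof -
  have T: "((\<lambda>y. (\<rho> y - \<rho> r) / (y - r)) \<longlongrightarrow> D) (at_right r)"
    using D unfolding has_field_derivative_iff by (rule tendsto_mono[rotated]) (simp add: at_le)
  have ev: "\<forall>\<^sub>F y in at_right r. y > r" by (rule eventually_at_right_less)
  have "0 \<le> D"
  proof (rule tendsto_lowerbound[OF T])
    show "\<forall>\<^sub>F y in at_right r. 0 \<le> (\<rho> y - \<rho> r) / (y - r)"
      using ev by eventually_elim (use mono r in \<open>auto intro!: divide_nonneg_pos\<close>)
  qed simp
  moreover have "D \<le> \<rho> r / r"
  proof (rule tendsto_upperbound[OF T])
    show "\<forall>\<^sub>F y in at_right r. (\<rho> y - \<rho> r) / (y - r) \<le> \<rho> r / r"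
      using ev proof eventually_elim
      case (elim y)
      have "\<rho> y / y \<le> \<rho> r / r" using ratio r elim by auto
      hence "\<rho> y \<le> y * (\<rho> r / r)" using elim r by (simp add: field_simps)
      hence "\<rho> y - \<rho> r \<le> (y - r) * (\<rho> r / r)" using r by (simp add: field_simps)
      thus ?case using elim by (simp add: field_simps)
    qed
  qed simp
  moreover have "\<rho> r / r \<le> lam"
  proof (rule field_le_epsilon)
    fix e :: real assume e: "e > 0"
    obtain d where d: "d > 0" "\<forall>t. 0 < t \<and> t < d \<longrightarrow> \<bar>\<rho> t / t - lam\<bar> \<le> e" using lim[OF e] by blast
    define s where "s = min r (d/2)"
    have s: "0 < s" "s \<le> r" "s < d" using d r by (auto simp: s_def)
    have "\<rho> r / r \<le> \<rho> s / s" using ratio s by auto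
    also have "\<dots> \<le> lam + e" using d(2) s by fastforce
    finally show "\<rho> r / r \<le> lam + e" .
  qed
  ultimately show ?thesis by linarith
qed

lemma grad_eq:
  assumes "(f has_derivative (\<lambda>h. g \<bullet> h)) (at x)"
  shows "grad f x = g"
  unfolding grad_def
proof (rule the_equality)
  show "(f has_derivative (\<lambda>h. g \<bullet> h)) (at x)" using assms .
next
  fix g' assume "(f has_derivative (\<lambda>h. g' \<bullet> h)) (at x)"
  from has_derivative_unique[OF this assms] have "(\<lambda>h. g'\<bullet>h) = (\<lambda>h. g\<bullet>h)" .
  then have "g'\<bullet>(g'-g) = g\<bullet>(g'-g)" by metis
  hence "(g'-g)\<bullet>(g'-g) = 0" by (simp add: inner_diff_left)
  thus "g' = g" by simp
qed

lemma deriv_repr: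
  assumes "(f has_derivative D) (at x)"
  shows "\<exists>g::'a::euclidean_space. (f has_derivative (\<lambda>h. g \<bullet> h)) (at x)"
proof -
  have bl: "linear D" using has_derivative_bounded_linear[OF assms] bounded_linear.linear by blast
  define g where "g = (\<Sum>b\<in>Basis. D b *\<^sub>R b)"
  have "D h = g \<bullet> h" for h
  proof -
    have "D h = D (\<Sum>b\<in>Basis. (h \<bullet> b) *\<^sub>R b)" by (simp add: euclidean_representation)
    also have "\<dots> = (\<Sum>b\<in>Basis. (h \<bullet> b) * D b)"
      by (simp add: linear_sum[OF bl] linear_scale[OF bl])
    also have "\<dots> = g \<bullet> h" unfolding g_def by (simp add: inner_sum_right inner_commute mult.commute)
    finally show ?thesis .
  qed
  then have "D = (\<lambda>h. g \<bullet> h)" by auto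
  then show ?thesis using assms by auto
qed

lemma lin_col: "bounded_linear (\<lambda>\<theta>::real^'q^'p. column j \<theta>)"
  apply (rule linear_conv_bounded_linear[THEN iffD1])
  by (rule linearI) (auto simp: column_def vec_eq_iff)
lemma lin_colG: "bounded_linear (\<lambda>\<theta>::real^'q^'p. (G::real^'p^'p) *v column j \<theta>)"
  apply (rule linear_conv_bounded_linear[THEN iffD1])
  apply (rule linearI) by (auto simp: column_def vec_eq_iff matrix_vector_mult_def sum.distrib algebra_simps sum_distrib_left)
lemma Ln_diff: "Ln Gam gam differentiable (at (x::real^'q::finite^'p::finite))"
  unfolding Ln_def
  by (intro differentiable_sum ballI differentiable_diff differentiable_mult differentiable_const
     differentiable_inner bounded_linear_imp_differentiable lin_col lin_colG) simp_all


theorem lemma8: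
  fixes S :: "'p::finite set"
    and Gam :: "'q::finite \<Rightarrow> real^'p^'p" and gam :: "'q \<Rightarrow> real^'p"
    and \<rho> :: "real \<Rightarrow> real" and lam \<mu> :: real
    and n :: nat and \<alpha>1 \<alpha>2 \<tau>1 \<tau>2 R :: real
    and \<theta>star \<theta>hat zhat :: "real^'q^'p"
  assumes Gam_sym: "\<And>j. transpose (Gam j) = Gam j"
    and Gam_psd: "\<And>j x. x \<bullet> (Gam j *v x) \<ge> 0"
    and n_pos: "n > 0"
    and amen: "amenable \<rho> lam \<mu>"
    and rsc: "joint_RSC (Ln Gam gam) n \<alpha>1 \<alpha>2 \<tau>1 \<tau>2"
    and supp_star: "\<And>i. i \<notin> S \<Longrightarrow> \<theta>star $ i = 0"
    and supp_hat: "\<And>i. i \<notin> S \<Longrightarrow> \<theta>hat $ i = 0"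
    and R_star: "norm12 \<theta>star \<le> R"
    and R_hat: "norm12 \<theta>hat \<le> R"
    and zhat_sub: "subgrad12 zhat \<theta>hat"
    and stationary: "\<And>i. i \<in> S \<Longrightarrow> (grad (Lbar Gam gam \<rho> lam) \<theta>hat + lam *\<^sub>R zhat) $ i = 0"
    and grad_bound: "norminf2 (grad (Ln Gam gam) \<theta>star) \<le> lam / 2"
    and lam_bound: "lam \<le> \<alpha>2 / (6 * R)"
    and n_bound: "real n \<ge> 16 * R\<^sup>2 * \<tau>2\<^sup>2 / \<alpha>2\<^sup>2 * ln (real CARD('p))"
  shows "norm (\<theta>hat - \<theta>star) \<le> 1"
proof -
  from amen have r0: "\<rho> 0 = 0"
    and mono: "\<forall>s t. 0 \<le> s \<and> s \<le> t \<longrightarrow> \<rho> s \<le> \<rho> t"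
    and ratio: "\<forall>s t. 0 < s \<and> s \<le> t \<longrightarrow> \<rho> t / t \<le> \<rho> s / s"
    and diff: "\<forall>t. t \<noteq> 0 \<longrightarrow> \<rho> differentiable (at t)"
    and cvx: "convex_on UNIV (\<lambda>t. \<rho> t + \<mu> / 2 * t\<^sup>2)"
    and lim: "((deriv \<rho>) \<longlongrightarrow> lam) (at_right 0)"
    unfolding amenable_def by auto
  have cont: "continuous_on UNIV \<rho>" using rho_cont[OF cvx] .
  have limq: "\<And>e. e > 0 \<Longrightarrow> \<exists>d>0. \<forall>t. 0 < t \<and> t < d \<longrightarrow> \<bar>\<rho> t / t - lam\<bar> \<le> e"
    using rho_lim[OF cont r0 diff lim] by blast
  define G :: "real^'q^'p" where
    "G = (\<chi> i. if \<theta>hat $ i = 0 then 0 else (lam - deriv \<rho> (norm (\<theta>hat $ i))) *\<^sub>R sgn (\<theta>hat $ i))"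
  have rowQ: "((\<lambda>\<theta>::real^'q^'p. qlam \<rho> lam (norm (\<theta> $ i))) has_derivative (\<lambda>h. G $ i \<bullet> h $ i)) (at \<theta>hat)" for i
  proof (cases "\<theta>hat $ i = 0")
    case True
    show ?thesis
      unfolding has_derivative_within_alt
    proof (intro conjI allI impI)
      show "bounded_linear (\<lambda>h::real^'q^'p. G $ i \<bullet> h $ i)" using True by (simp add: G_def)
      fix e :: real assume e: "e > 0"
      obtain d where d: "d > 0" "\<forall>t. 0 < t \<and> t < d \<longrightarrow> \<bar>\<rho> t / t - lam\<bar> \<le> e"
        using limq[OF e] by blast
      show "\<exists>d>0. \<forall>y\<in>UNIV. norm (y - \<theta>hat) < d \<longrightarrow>
          norm (qlam \<rho> lam (norm (y $ i)) - qlam \<rho> lam (norm (\<theta>hat $ i)) - G $ i \<bullet> (y - \<theta>hat) $ i)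
            \<le> e * norm (y - \<theta>hat)"
      proof (intro exI[of _ d] conjI ballI impI)
        fix y :: "real^'q^'p" assume y: "norm (y - \<theta>hat) < d"
        define t where "t = norm (y $ i)"
        have tle: "t \<le> norm (y - \<theta>hat)"
          using Finite_Cartesian_Product.norm_nth_le[where x="y - \<theta>hat" and i=i] True by (simp add: t_def)
        have t0: "t \<ge> 0" by (simp add: t_def)
        have "\<bar>lam * t - \<rho> t\<bar> \<le> e * t"
        proof (cases "t = 0")
          case True then show ?thesis using r0 by simp
        next
          case False
          then have tp: "t > 0" using t0 by simp
          have "\<bar>\<rho> t / t - lam\<bar> \<le> e" using d(2) tp tle y by auto
          then have "\<bar>\<rho> t / t - lam\<bar> * t \<le> e * t" using tp by (simp add: mult_right_mono)
          moreover have "\<bar>\<rho> t / t - lam\<bar> * t = \<bar>lam * t - \<rho> t\<bar>"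
            using tp by (simp add: abs_mult[symmetric] field_simps abs_minus_commute)
          ultimately show ?thesis by simp
        qed
        also have "\<dots> \<le> e * norm (y - \<theta>hat)" using tle e by simp
        finally show "norm (qlam \<rho> lam (norm (y $ i)) - qlam \<rho> lam (norm (\<theta>hat $ i)) - G $ i \<bullet> (y - \<theta>hat) $ i)
            \<le> e * norm (y - \<theta>hat)"
          using True r0 by (simp add: G_def qlam_def t_def)
      qed (use d in auto)
    qed
  next
    case False
    define v where "v = \<theta>hat $ i"
    define r where "r = norm v"
    have rp: "r > 0" using False by (simp add: r_def v_def)
    have Dr: "(\<rho> has_real_derivative deriv \<rho> r) (at r)"
      using diff rp DERIV_deriv_iff_real_differentiable by auto
    have hn: "((\<lambda>\<theta>::real^'q^'p. norm (\<theta> $ i)) has_derivative (\<lambda>h. (h $ i) \<bullet> sgn v)) (at \<theta>hat)"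
    proof -
      have hi: "((\<lambda>\<theta>::real^'q^'p. \<theta> $ i) has_derivative (\<lambda>h. h $ i)) (at \<theta>hat)"
        by (rule bounded_linear_imp_has_derivative[OF bounded_linear_vec_nth])
      show ?thesis using has_derivative_compose[OF hi has_derivative_norm[OF False]] by (simp add: v_def)
    qed
    have hr: "((\<lambda>\<theta>::real^'q^'p. \<rho> (norm (\<theta> $ i))) has_derivative (\<lambda>h. deriv \<rho> r * ((h $ i) \<bullet> sgn v))) (at \<theta>hat)"
      using has_derivative_compose[OF hn, of \<rho>] has_field_derivative_imp_has_derivative[OF Dr]
      by (simp add: r_def v_def)
    have hl: "((\<lambda>\<theta>::real^'q^'p. lam * norm (\<theta> $ i)) has_derivative (\<lambda>h. lam * ((h $ i) \<bullet> sgn v))) (at \<theta>hat)"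
      by (rule has_derivative_mult_right[OF hn])
    have "((\<lambda>\<theta>::real^'q^'p. lam * norm (\<theta> $ i) - \<rho> (norm (\<theta> $ i))) has_derivative
        (\<lambda>h. lam * ((h $ i) \<bullet> sgn v) - deriv \<rho> r * ((h $ i) \<bullet> sgn v))) (at \<theta>hat)"
      by (rule has_derivative_diff[OF hl hr])
    moreover have "(\<lambda>h::real^'q^'p. lam * ((h $ i) \<bullet> sgn v) - deriv \<rho> r * ((h $ i) \<bullet> sgn v)) = (\<lambda>h. G $ i \<bullet> h $ i)"
      using False by (auto simp: G_def r_def v_def algebra_simps inner_commute)
    ultimately show ?thesis by (simp add: qlam_def)
  qed
  have Q: "((\<lambda>\<theta>::real^'q^'p. \<Sum>i\<in>UNIV. qlam \<rho> lam (norm (\<theta> $ i))) has_derivative (\<lambda>h. G \<bullet> h)) (at \<theta>hat)"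
  proof -
    have "((\<lambda>\<theta>::real^'q^'p. \<Sum>i\<in>UNIV. qlam \<rho> lam (norm (\<theta> $ i))) has_derivative (\<lambda>h. \<Sum>i\<in>UNIV. G $ i \<bullet> h $ i)) (at \<theta>hat)"
      by (rule has_derivative_sum) (use rowQ in auto)
    then show ?thesis by (simp add: inner_vec_def)
  qed
  obtain D where "(Ln Gam gam has_derivative D) (at \<theta>hat)"
    using Ln_diff[of Gam gam \<theta>hat] unfolding differentiable_def by blast
  then obtain gL where gL: "(Ln Gam gam has_derivative (\<lambda>h. gL \<bullet> h)) (at \<theta>hat)"
    using deriv_repr by blast
  have gradL: "grad (Ln Gam gam) \<theta>hat = gL" using grad_eq[OF gL] .
  have "(Lbar Gam gam \<rho> lam has_derivative (\<lambda>h. gL \<bullet> h - G \<bullet> h)) (at \<theta>hat)"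
    unfolding Lbar_def[abs_def] by (rule has_derivative_diff[OF gL Q])
  then have "(Lbar Gam gam \<rho> lam has_derivative (\<lambda>h. (gL - G) \<bullet> h)) (at \<theta>hat)"
    by (simp add: inner_diff_left)
  then have gradLbar: "grad (Lbar Gam gam \<rho> lam) \<theta>hat = gL - G" using grad_eq by blast
  define gs where "gs = grad (Ln Gam gam) \<theta>star"
  define \<Delta> where "\<Delta> = \<theta>hat - \<theta>star"
  have gs_row: "norm (gs $ i) \<le> lam / 2" for i
  proof -
    have "norm (gs $ i) \<le> norminf2 gs" unfolding norminf2_def by (rule Max_ge) auto
    then show ?thesis using grad_bound by (simp add: gs_def)
  qed
  have lam0: "lam \<ge> 0" using gs_row[of undefined] norm_ge_zero[of "gs $ undefined"] by linarith
  have deriv_b: "0 \<le> deriv \<rho> r \<and> deriv \<rho> r \<le> lam" if "r > 0" for r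
  proof -
    have "(\<rho> has_real_derivative deriv \<rho> r) (at r)"
      using diff that DERIV_deriv_iff_real_differentiable by auto
    then show ?thesis using deriv_bounds[OF mono ratio limq _ that] by blast
  qed
  have row_up: "(gL - gs) $ i \<bullet> \<Delta> $ i \<le> (3/2 * lam) * norm (\<Delta> $ i)" for i
  proof (cases "i \<in> S")
    case False
    then show ?thesis using supp_hat supp_star by (simp add: \<Delta>_def)
  next
    case True
    have st: "(gL - G + lam *\<^sub>R zhat) $ i = 0" using stationary[OF True] gradLbar by simp
    then have gLi: "gL $ i = G $ i - lam *\<^sub>R zhat $ i"
      by (simp add: algebra_simps eq_diff_eq)
    have nb: "norm (G $ i - lam *\<^sub>R zhat $ i) \<le> lam"
    proof (cases "\<theta>hat $ i = 0")
      case True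
      have "norm (zhat $ i) \<le> 1" using zhat_sub True unfolding subgrad12_def by blast
      then show ?thesis using True lam0 by (simp add: G_def mult_left_le)
    next
      case False
      have z: "zhat $ i = sgn (\<theta>hat $ i)"
        using zhat_sub False unfolding subgrad12_def by (simp add: sgn_div_norm)
      have "G $ i - lam *\<^sub>R zhat $ i = (- deriv \<rho> (norm (\<theta>hat $ i))) *\<^sub>R sgn (\<theta>hat $ i)"
        using False z by (simp add: G_def algebra_simps)
      then have "norm (G $ i - lam *\<^sub>R zhat $ i) = \<bar>deriv \<rho> (norm (\<theta>hat $ i))\<bar>"
        using False by (simp add: norm_sgn)
      then show ?thesis using deriv_b[of "norm (\<theta>hat $ i)"] False by simp
    qed
    have "(gL - gs) $ i \<bullet> \<Delta> $ i = gL $ i \<bullet> \<Delta> $ i + (- gs $ i) \<bullet> \<Delta> $ i"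
      by (simp add: inner_diff_left)
    also have "\<dots> \<le> norm (gL $ i) * norm (\<Delta> $ i) + norm (gs $ i) * norm (\<Delta> $ i)"
      using norm_cauchy_schwarz[of "gL $ i" "\<Delta> $ i"] norm_cauchy_schwarz[of "- gs $ i" "\<Delta> $ i"]
      by simp
    also have "\<dots> \<le> lam * norm (\<Delta> $ i) + (lam/2) * norm (\<Delta> $ i)"
      using nb gs_row[of i] gLi by (intro add_mono mult_right_mono) auto
    finally show ?thesis by (simp add: algebra_simps)
  qed
  have up: "(gL - gs) \<bullet> \<Delta> \<le> (3/2 * lam) * norm12 \<Delta>"
  proof -
    have "(gL - gs) \<bullet> \<Delta> = (\<Sum>i\<in>UNIV. (gL - gs) $ i \<bullet> \<Delta> $ i)" by (simp add: inner_vec_def)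
    also have "\<dots> \<le> (\<Sum>i\<in>UNIV. (3/2 * lam) * norm (\<Delta> $ i))" by (rule sum_mono) (rule row_up)
    also have "\<dots> = (3/2 * lam) * norm12 \<Delta>" by (simp add: norm12_def sum_distrib_left)
    finally show ?thesis .
  qed
  have n12_0: "norm12 A \<ge> 0" for A :: "real^'q^'p" unfolding norm12_def by (simp add: sum_nonneg)
  have R0: "R \<ge> 0" using n12_0[of \<theta>star] R_star by linarith
  have nD: "norm12 \<Delta> \<le> 2 * R"
  proof -
    have "norm12 \<Delta> \<le> (\<Sum>i\<in>UNIV. norm (\<theta>hat $ i) + norm (\<theta>star $ i))"
      unfolding norm12_def \<Delta>_def by (rule sum_mono) (simp add: norm_triangle_ineq4)
    also have "\<dots> = norm12 \<theta>hat + norm12 \<theta>star" by (simp add: norm12_def sum.distrib)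
    finally show ?thesis using R_star R_hat by linarith
  qed
  have lamR: "lam * R \<le> \<alpha>2 / 6"
  proof (cases "R = 0")
    case True
    have "\<alpha>2 > 0" using rsc unfolding joint_RSC_def by auto
    then show ?thesis using True by simp
  next
    case False
    then have "R > 0" using R0 by simp
    then show ?thesis using lam_bound by (simp add: field_simps)
  qed
  have up2: "(gL - gs) \<bullet> \<Delta> \<le> \<alpha>2 / 2"
  proof -
    have "(3/2 * lam) * norm12 \<Delta> \<le> (3/2 * lam) * (2 * R)" using nD lam0 by (intro mult_left_mono) auto
    then show ?thesis using up lamR by linarith
  qed
  show ?thesis
  proof (cases "norm \<Delta> \<ge> 1")
    case False then show ?thesis by (simp add: \<Delta>_def)
  next
    case True
    have a2: "\<alpha>2 > 0" and t2: "\<tau>2 \<ge> 0" using rsc unfolding joint_RSC_def by auto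
    have low: "(grad (Ln Gam gam) (\<theta>star + \<Delta>) - grad (Ln Gam gam) \<theta>star) \<bullet> \<Delta>
          \<ge> \<alpha>2 * norm \<Delta> - \<tau>2 * sqrt (ln (real CARD('p)) / real n) * norm12 \<Delta>"
      using rsc True unfolding joint_RSC_def by blast
    have eq: "\<theta>star + \<Delta> = \<theta>hat" by (simp add: \<Delta>_def)
    define c where "c = \<tau>2 * sqrt (ln (real CARD('p)) / real n)"
    have lnp: "ln (real CARD('p)) \<ge> 0"
    proof -
      have "CARD('p) \<ge> 1" using finite_UNIV_card_ge_0[where 'a='p] by simp
      then show ?thesis by simp
    qed
    have q0: "ln (real CARD('p)) / real n \<ge> 0" using lnp by simp
    have c0: "c \<ge> 0" using t2 q0 by (simp add: c_def)
    have "(c * R)\<^sup>2 = \<tau>2\<^sup>2 * R\<^sup>2 * ln (real CARD('p)) / real n"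
      using q0 by (simp add: c_def power_mult_distrib)
    also have "\<dots> \<le> (\<alpha>2 / 4)\<^sup>2"
    proof -
      have "16 * R\<^sup>2 * \<tau>2\<^sup>2 / \<alpha>2\<^sup>2 * ln (real CARD('p)) \<le> real n" using n_bound .
      then have "16 * R\<^sup>2 * \<tau>2\<^sup>2 * ln (real CARD('p)) \<le> real n * \<alpha>2\<^sup>2"
        using a2 by (simp add: field_simps)
      then show ?thesis using n_pos by (simp add: field_simps power_divide)
    qed
    finally have "c * R \<le> \<alpha>2 / 4" by (rule power2_le_imp_le) (use a2 in simp)
    moreover have "c * norm12 \<Delta> \<le> c * (2 * R)" using c0 nD by (simp add: mult_left_mono)
    ultimately have "c * norm12 \<Delta> \<le> \<alpha>2 / 2" by linarith
    then have "\<alpha>2 * norm \<Delta> \<le> \<alpha>2" using low up2 eq gradL gs_def c_def by simp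
    then show ?thesis using a2 by (simp add: \<Delta>_def)
  qed
qed

end
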